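(* Let $\mathcal R:(\mathbb R^d\setminus\{0\})\times\mathbb R\to\mathbb R$ be differentiable and scale-invariant in its first argument: $\mathcal R(kw,\alpha)=\mathcal R(w,\alpha)$ for all $k>0$. Let $\hat w\in\mathbb R^d$ be fixed, let $\eta,\eta_\alpha>0$, and let $(w_t,\alpha_t)$ be generated by $w_{t+1}=w_t-\eta\nabla_w\mathcal R(w_t,\alpha_t)$, $\alpha_{t+1}=\alpha_t-\eta_\alpha\partial_\alpha\mathcal R(w_t,\alpha_t)$ with $w_0\neq0$. Write $\nabla_w\mathcal R_t:=\nabla_w\mathcal R(w_t,\alpha_t)$, $\rho_t:=\langle\hat w,w_t\rangle/\|w_t\|$, $\rho_t^\perp:=\|\hat w-\rho_tw_t/\|w_t\|\|$. (Convergence) If for some $t\ge0$, $\rho_t>0$ and $$\frac{\eta\rho_t}{\|w_t\|}\|\nabla_w\mathcal R_t\|^2\le-2\langle\hat w,\nabla_w\mathcal R_t\rangle,$$ then $(\rho^\perp_{t+1})^2\le(\rho^\perp_t)^2$. (Divergence) If for some $t\ge0$, $0<\rho_t^\perp/\rho_t<1$, $\alpha_t>0$ and $$\frac{\eta}{\|w_t\|}\|\nabla_w\mathcal R_t\|\ge\frac{2\rho_t\rho_t^\perp}{\rho_t^2-(\rho_t^\perp)^2},$$ then $(\rho^\perp_{t+1})^2\ge(\rho^\perp_t)^2$.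
   Context: All norms and inner products are Euclidean. Note that scale-invariance implies $\langle w,\nabla_w\mathcal R(w,\alpha)\rangle=0$, so all iterates stay nonzero. *)

theory Defs
  imports "HOL-Analysis.Analysis"
begin

definition rho :: "'a::real_inner \<Rightarrow> 'a \<Rightarrow> real" where
  "rho wh w = (wh \<bullet> w) / norm w"

definition rho_perp :: "'a::real_inner \<Rightarrow> 'a \<Rightarrow> real" where
  "rho_perp wh w = norm (wh - (rho wh w / norm w) *\<^sub>R w)"

end

theory Submission
  imports Defs
begin

lemma rp_sq:
  fixes wh v :: "'a::real_inner"
  assumes "v \<noteq> 0"
  shows "(rho_perp wh v)\<^sup>2 = (norm wh)\<^sup>2 - (rho wh v)\<^sup>2"
proof -
  have n: "norm v > 0" using assms by simp
  have "(rho_perp wh v)\<^sup>2 = (norm wh)\<^sup>2 - 2 * (rho wh v / norm v) * (wh \<bullet> v)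
      + (rho wh v / norm v)\<^sup>2 * (norm v)\<^sup>2"
    unfolding rho_perp_def power2_norm_eq_inner
    by (simp add: inner_diff inner_commute power2_eq_square algebra_simps)
  also have "\<dots> = (norm wh)\<^sup>2 - (rho wh v)\<^sup>2"
    using n unfolding rho_def by (simp add: field_simps power2_eq_square)
  finally show ?thesis .
qed

lemma orth:
  fixes R :: "'a::real_inner \<Rightarrow> real \<Rightarrow> real" and gw :: "'a \<Rightarrow> real \<Rightarrow> 'a"
  assumes deriv: "((\<lambda>p. R (fst p) (snd p)) has_derivative (\<lambda>p. gw v b \<bullet> fst p + ga v b * snd p)) (at (v, b))"
    and scale: "\<And>k. k > 0 \<Longrightarrow> R (k *\<^sub>R v) b = R v b"
  shows "gw v b \<bullet> v = 0"
proof -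
  have d1: "((\<lambda>k::real. (k *\<^sub>R v, b)) has_derivative (\<lambda>h. (h *\<^sub>R v, 0))) (at 1)"
    by (auto intro!: derivative_eq_intros)
  have d2: "((\<lambda>p. R (fst p) (snd p)) has_derivative (\<lambda>p. gw v b \<bullet> fst p + ga v b * snd p)) (at ((\<lambda>k::real. (k *\<^sub>R v, b)) 1))"
    using deriv by simp
  have "((\<lambda>k::real. R (k *\<^sub>R v) b) has_derivative (\<lambda>h. gw v b \<bullet> (h *\<^sub>R v))) (at 1)"
    using has_derivative_compose[OF d1 d2] by (simp add: o_def)
  hence D1: "((\<lambda>k::real. R (k *\<^sub>R v) b) has_real_derivative (gw v b \<bullet> v)) (at 1)"
    by (simp add: has_field_derivative_def mult.commute[of _ "gw v b \<bullet> v"])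
  have D2: "((\<lambda>k::real. R (k *\<^sub>R v) b) has_real_derivative 0) (at 1)"
  proof -
    have "((\<lambda>k::real. R v b) has_real_derivative 0) (at 1)" by simp
    then show ?thesis
      by (rule has_field_derivative_transform_within_open[where S="{0<..}"]) (auto simp: scale)
  qed
  show ?thesis using DERIV_unique[OF D1 D2] .
qed

theorem lemma5p1:
  fixes R :: "real ^ 'd \<Rightarrow> real \<Rightarrow> real"
    and gw :: "real ^ 'd \<Rightarrow> real \<Rightarrow> real ^ 'd"
    and ga :: "real ^ 'd \<Rightarrow> real \<Rightarrow> real"
    and wh :: "real ^ 'd"
    and eta eta_a :: real
    and w :: "nat \<Rightarrow> real ^ 'd"
    and a :: "nat \<Rightarrow> real"
  assumes deriv: "\<And>v b. v \<noteq> 0 \<Longrightarrow>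
      ((\<lambda>p. R (fst p) (snd p)) has_derivative (\<lambda>p. gw v b \<bullet> fst p + ga v b * snd p)) (at (v, b))"
    and scale: "\<And>v b k. v \<noteq> 0 \<Longrightarrow> k > 0 \<Longrightarrow> R (k *\<^sub>R v) b = R v b"
    and eta: "eta > 0" and eta_a: "eta_a > 0"
    and w0: "w 0 \<noteq> 0"
    and wstep: "\<And>t. w (Suc t) = w t - eta *\<^sub>R gw (w t) (a t)"
    and astep: "\<And>t. a (Suc t) = a t - eta_a * ga (w t) (a t)"
  shows "\<forall>t. (rho wh (w t) > 0 \<and>
            eta * rho wh (w t) / norm (w t) * (norm (gw (w t) (a t)))\<^sup>2
              \<le> - 2 * (wh \<bullet> gw (w t) (a t))
            \<longrightarrow> (rho_perp wh (w (Suc t)))\<^sup>2 \<le> (rho_perp wh (w t))\<^sup>2)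
         \<and> (0 < rho_perp wh (w t) / rho wh (w t) \<and> rho_perp wh (w t) / rho wh (w t) < 1 \<and> a t > 0 \<and>
            eta / norm (w t) * norm (gw (w t) (a t))
              \<ge> 2 * rho wh (w t) * rho_perp wh (w t) / ((rho wh (w t))\<^sup>2 - (rho_perp wh (w t))\<^sup>2)
            \<longrightarrow> (rho_perp wh (w (Suc t)))\<^sup>2 \<ge> (rho_perp wh (w t))\<^sup>2)"
proof (intro allI conjI impI)
  fix t
  define v where "v = w t"
  define g where "g = gw v (a t)"
  define n where "n = norm v"
  define G where "G = norm g"
  define c where "c = wh \<bullet> g"
  define r where "r = rho wh v"
  have ws: "w (Suc t) = v - eta *\<^sub>R g" using wstep v_def g_def by simp
  have common: "v \<noteq> 0 \<Longrightarrow> n > 0 \<and> w (Suc t) \<noteq> 0 \<and>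
      (rho wh (w (Suc t)))\<^sup>2 = (n * r - eta * c)\<^sup>2 / (n\<^sup>2 + eta\<^sup>2 * G\<^sup>2)
      \<and> g \<bullet> v = 0"
  proof -
    assume v0: "v \<noteq> 0"
    have o: "g \<bullet> v = 0" unfolding g_def
      by (rule orth[where R=R and ga=ga]) (use deriv scale v0 in auto)
    have nn: "(norm (w (Suc t)))\<^sup>2 = n\<^sup>2 + eta\<^sup>2 * G\<^sup>2"
      unfolding ws n_def G_def power2_norm_eq_inner using o
      by (simp add: inner_diff inner_commute algebra_simps power2_eq_square)
    have np: "n > 0" using v0 n_def by simp
    hence "(norm (w (Suc t)))\<^sup>2 > 0" using nn by (simp add: add_pos_nonneg)
    hence wn: "w (Suc t) \<noteq> 0" by auto
    have "wh \<bullet> w (Suc t) = n * r - eta * c"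
      using np unfolding ws r_def rho_def c_def n_def by (simp add: inner_diff)
    hence "(rho wh (w (Suc t)))\<^sup>2 = (n * r - eta * c)\<^sup>2 / (n\<^sup>2 + eta\<^sup>2 * G\<^sup>2)"
      unfolding rho_def using nn by (simp add: power_divide)
    thus ?thesis using np wn o by simp
  qed
  {
    assume h: "rho wh (w t) > 0 \<and>
            eta * rho wh (w t) / norm (w t) * (norm (gw (w t) (a t)))\<^sup>2
              \<le> - 2 * (wh \<bullet> gw (w t) (a t))"
    hence rp: "r > 0" and h2: "eta * r / n * G\<^sup>2 \<le> - 2 * c"
      unfolding r_def n_def G_def c_def g_def v_def by auto
    have v0: "v \<noteq> 0" using rp unfolding r_def rho_def by auto
    obtain np: "n > 0" and wn: "w (Suc t) \<noteq> 0" and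
      rr: "(rho wh (w (Suc t)))\<^sup>2 = (n * r - eta * c)\<^sup>2 / (n\<^sup>2 + eta\<^sup>2 * G\<^sup>2)"
      using common[OF v0] by blast
    define x where "x = eta\<^sup>2 * G\<^sup>2"
    have x0: "x \<ge> 0" unfolding x_def by simp
    have "eta * (eta * r / n * G\<^sup>2) \<le> eta * (- 2 * c)" using mult_left_mono[OF h2, of eta] eta
      by linarith
    moreover have "eta * (- 2 * c) = -2 * (eta * c)" "- eta * c = - (eta * c)" by simp_all
    ultimately have "- eta * c \<ge> eta * (eta * r / n * G\<^sup>2) / 2"
    proof -
      fix P Q :: real
      have gen: "P \<le> -2 * Q \<Longrightarrow> P / 2 \<le> - Q" for P Q :: real by linarith
      show ?thesis using gen[of "eta * (eta * r / n * G\<^sup>2)" "eta * c"]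
        \<open>eta * (eta * r / n * G\<^sup>2) \<le> eta * (- 2 * c)\<close> by simp
    qed
    hence "- eta * c \<ge> r * x / (2 * n)" unfolding x_def by (simp add: power2_eq_square field_simps)
    hence A: "n * r - eta * c \<ge> r * (n\<^sup>2 + x / 2) / n" using np by (simp add: field_simps power2_eq_square)
    have B: "r * (n\<^sup>2 + x / 2) / n \<ge> 0" using rp np x0 by simp
    have "(n * r - eta * c)\<^sup>2 \<ge> (r * (n\<^sup>2 + x / 2) / n)\<^sup>2"
      using A B power_mono by blast
    moreover have "(r * (n\<^sup>2 + x / 2) / n)\<^sup>2 \<ge> r\<^sup>2 * (n\<^sup>2 + x)"
    proof -
      have "(n\<^sup>2 + x / 2)\<^sup>2 \<ge> n\<^sup>2 * (n\<^sup>2 + x)" by (simp add: power2_eq_square algebra_simps)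
      hence "r\<^sup>2 * (n\<^sup>2 + x / 2)\<^sup>2 \<ge> r\<^sup>2 * (n\<^sup>2 * (n\<^sup>2 + x))" by (simp add: mult_left_mono)
      hence "r\<^sup>2 * (n\<^sup>2 + x / 2)\<^sup>2 / n\<^sup>2 \<ge> r\<^sup>2 * (n\<^sup>2 * (n\<^sup>2 + x)) / n\<^sup>2"
        by (rule divide_right_mono) simp
      moreover have "r\<^sup>2 * (n\<^sup>2 * (n\<^sup>2 + x)) / n\<^sup>2 = r\<^sup>2 * (n\<^sup>2 + x)" using np by simp
      moreover have "(r * (n\<^sup>2 + x / 2) / n)\<^sup>2 = r\<^sup>2 * (n\<^sup>2 + x / 2)\<^sup>2 / n\<^sup>2"
        by (simp add: power_divide power_mult_distrib)
      ultimately show ?thesis by linarith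
    qed
    ultimately have "(n * r - eta * c)\<^sup>2 \<ge> r\<^sup>2 * (n\<^sup>2 + x)" by linarith
    moreover have "n\<^sup>2 + x > 0" using np x0 by (simp add: add_pos_nonneg)
    ultimately have "(rho wh (w (Suc t)))\<^sup>2 \<ge> r\<^sup>2" unfolding rr x_def[symmetric]
      by (simp add: pos_le_divide_eq)
    thus "(rho_perp wh (w (Suc t)))\<^sup>2 \<le> (rho_perp wh (w t))\<^sup>2"
      using rp_sq[OF wn, of wh] rp_sq[OF v0, of wh] unfolding r_def v_def by simp
  }
  {
    assume h: "0 < rho_perp wh (w t) / rho wh (w t) \<and> rho_perp wh (w t) / rho wh (w t) < 1 \<and> a t > 0 \<and>
            eta / norm (w t) * norm (gw (w t) (a t))
              \<ge> 2 * rho wh (w t) * rho_perp wh (w t) / ((rho wh (w t))\<^sup>2 - (rho_perp wh (w t))\<^sup>2)"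
    define q where "q = rho_perp wh v"
    have h1: "0 < q / r" and h2: "q / r < 1" and
      h3: "eta / n * G \<ge> 2 * r * q / (r\<^sup>2 - q\<^sup>2)"
      using h unfolding q_def r_def n_def G_def g_def v_def by auto
    have q0: "q \<ge> 0" unfolding q_def rho_perp_def by simp
    have rp: "r > 0" using h1 q0
      by (metis divide_le_0_iff not_less order_less_le)
    have qp: "q > 0" using h1 rp by (simp add: zero_less_divide_iff)
    have qr: "q < r" using h2 rp by (simp add: divide_less_eq)
    have v0: "v \<noteq> 0" using rp unfolding r_def rho_def by auto
    obtain np: "n > 0" and wn: "w (Suc t) \<noteq> 0" and
      rr: "(rho wh (w (Suc t)))\<^sup>2 = (n * r - eta * c)\<^sup>2 / (n\<^sup>2 + eta\<^sup>2 * G\<^sup>2)"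
      and o: "g \<bullet> v = 0"
      using common[OF v0] by blast
    have "c = (wh - (r / n) *\<^sub>R v) \<bullet> g" unfolding c_def using o
      by (simp add: inner_diff_left inner_diff_right inner_commute)
    hence "\<bar>c\<bar> \<le> q * G" unfolding q_def G_def rho_perp_def r_def n_def
      using Cauchy_Schwarz_ineq2 by metis
    hence cb: "\<bar>eta * c\<bar> \<le> q * (eta * G)" using eta by (simp add: abs_mult mult_left_mono algebra_simps)
    define s where "s = eta * G"
    have s0: "s \<ge> 0" unfolding s_def G_def using eta by simp
    have d: "r\<^sup>2 - q\<^sup>2 > 0" using qp qr by (simp add: power_strict_mono)
    have "s / n \<ge> 2 * r * q / (r\<^sup>2 - q\<^sup>2)" using h3 unfolding s_def by simp
    hence key: "s * (r\<^sup>2 - q\<^sup>2) \<ge> 2 * r * q * n" using d np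
      by (simp add: divide_le_eq le_divide_eq mult.commute)
    have "\<bar>n * r - eta * c\<bar> \<le> n * r + q * s" using cb mult_pos_pos[OF np rp] unfolding s_def by linarith
    hence "(n * r - eta * c)\<^sup>2 \<le> (n * r + q * s)\<^sup>2"
      by (metis abs_ge_zero le_trans power2_abs power_mono)
    also have "\<dots> \<le> r\<^sup>2 * (n\<^sup>2 + s\<^sup>2)"
    proof -
      have "s * (s * (r\<^sup>2 - q\<^sup>2)) \<ge> s * (2 * r * q * n)" using key s0 by (rule mult_left_mono)
      thus ?thesis by (simp add: power2_eq_square algebra_simps)
    qed
    finally have "(n * r - eta * c)\<^sup>2 \<le> r\<^sup>2 * (n\<^sup>2 + s\<^sup>2)" .
    moreover have "n\<^sup>2 + s\<^sup>2 > 0" using np by (simp add: add_pos_nonneg)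
    ultimately have "(rho wh (w (Suc t)))\<^sup>2 \<le> r\<^sup>2" unfolding rr
      by (simp add: s_def power_mult_distrib pos_divide_le_eq)
    thus "(rho_perp wh (w (Suc t)))\<^sup>2 \<ge> (rho_perp wh (w t))\<^sup>2"
      using rp_sq[OF wn, of wh] rp_sq[OF v0, of wh] unfolding r_def v_def by simp
  }
qed

end
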